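(* Consider the following setting. Let $\mathcal{Z}=\mathcal{Z}_1\times\cdots\times\mathcal{Z}_N\subset\mathbb{R}^n$ be a product of nonempty convex compact sets, and for each $i$ let $C_i:\mathcal{Z}_i\to\mathbb{R}$ be twice differentiable with $\nabla^2 C_i(z_i)\succeq\sigma_c I$ for some $\sigma_c>0$ and with Lipschitz continuous gradient on $\mathcal{Z}_i$. Let $g(z)=Rz+g_0$ be an affine map $\mathbb{R}^n\to\mathbb{R}^m$ with $\|R\|_F\le\sigma_g$, $\sigma_g>0$, and assume the convex problem $\min\{\sum_i C_i(z_i): z\in\mathcal{Z},\ g(z)\le 0\}$ satisfies Slater's condition. Fix $\phi>0$, let $\mathcal{L}(z,\mu)=\sum_i C_i(z_i)+\mu^\top g(z)-\frac{\phi}{2}\|\mu\|^2$, $h(\mu)=\min_{z\in\mathcal{Z}}\mathcal{L}(z,\mu)$, let $(z^*,\mu^* )$ be the unique saddle point of $\mathcal{L}$ over $\mathcal{Z}\times\mathbb{R}^m_{\ge0}$, and let $\sigma_h>0$ satisfy $(\nabla h(\mu)-\nabla h(\tilde\mu))^\top(\mu-\tilde\mu)\le-\sigma_h\|\mu-\tilde\mu\|^2$ for all $\mu,\tilde\mu\ge0$. Suppose there are no discrete decision variables, so the algorithm is the deterministic dual gradient method: from $\mu(1)\ge0$, $z(k+1)=\arg\min_{z\in\mathcal{Z}}\mathcal{L}(z,\mu(k))$ and $\mu(k+1)=[\mu(k)+\varepsilon(g(z(k+1))-\phi\mu(k))]_+$. If $0<\varepsilon<2\sigma_h/(\sigma_g^2/\sigma_c+\phi)^2$,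 then $\lim_{k\to\infty}\|\mu(k)-\mu^*\|^2=0$ and $\lim_{k\to\infty}\|z(k)-z^*\|^2=0$.
   Context: $[\cdot]_+$ denotes componentwise projection onto the nonnegative orthant; $\|\cdot\|$ is the Euclidean norm and $\|\cdot\|_F$ the Frobenius norm. *)

theory Defs
  imports "HOL-Analysis.Analysis"
begin

text \<open>Block structure: coordinates of z in R^n (index type 'n) are partitioned into
  N blocks (index type 'b) by blk :: 'n => 'b.  The block R^{n_i} is identified with
  the coordinate subspace of vectors supported on the i-th block.\<close>

definition blockspace :: "('n \<Rightarrow> 'b) \<Rightarrow> 'b \<Rightarrow> (real^'n) set" where
  "blockspace blk i = {x. \<forall>j. blk j \<noteq> i \<longrightarrow> x $ j = 0}"

definition blockproj :: "('n \<Rightarrow> 'b) \<Rightarrow> 'b \<Rightarrow> real^'n \<Rightarrow> real^'n" where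
  "blockproj blk i z = (\<chi> j. if blk j = i then z $ j else 0)"

definition prodset :: "('n \<Rightarrow> 'b) \<Rightarrow> ('b \<Rightarrow> (real^'n) set) \<Rightarrow> (real^'n) set" where
  "prodset blk Zb = {z. \<forall>i. blockproj blk i z \<in> Zb i}"

definition nonneg :: "real^'m \<Rightarrow> bool" where
  "nonneg x \<longleftrightarrow> (\<forall>j. 0 \<le> x $ j)"

definition posproj :: "real^'m \<Rightarrow> real^'m" where
  "posproj x = (\<chi> j. max 0 (x $ j))"

definition frob_norm :: "real^'n^'m \<Rightarrow> real" where
  "frob_norm R = sqrt (\<Sum>i\<in>UNIV. \<Sum>j\<in>UNIV. (R $ i $ j)^2)"

definition Lagr ::
  "('b::finite \<Rightarrow> real^'n \<Rightarrow> real) \<Rightarrow> ('n \<Rightarrow> 'b) \<Rightarrow> real^'n^'m \<Rightarrow> real^'m \<Rightarrow> real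
     \<Rightarrow> real^'n \<Rightarrow> real^'m \<Rightarrow> real" where
  "Lagr C blk R g0 \<phi> z \<mu> =
     (\<Sum>i\<in>UNIV. C i (blockproj blk i z)) + \<mu> \<bullet> (R *v z + g0) - \<phi> / 2 * (norm \<mu>)^2"

end

theory Submission
  imports Defs
begin


lemma mono01:
  fixes q :: "real \<Rightarrow> real" and q' :: "real \<Rightarrow> real"
  assumes d: "\<And>t. t \<in> {0..1} \<Longrightarrow> (q has_real_derivative q' t) (at t within {0..1})"
    and nn: "\<And>t. 0 < t \<Longrightarrow> t < 1 \<Longrightarrow> q' t \<ge> 0"
    and t: "t \<in> {0..1}"
  shows "q 0 \<le> q t"
proof -
  have c: "continuous_on {0..1} q"
    using d by (rule DERIV_continuous_on)
  show ?thesis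
  proof (rule DERIV_nonneg_imp_increasing_open[where f=q])
    show "0 \<le> t" using t by auto
    show "continuous_on {0..t} q" using c t by (auto intro: continuous_on_subset)
  next
    fix u assume u: "0 < u" "u < t"
    have "u \<in> interior {0..1::real}" using u t by auto
    then have "at u within {0..1} = at u" by (rule at_within_interior)
    then have "(q has_real_derivative q' u) (at u)" using d[of u] u t by auto
    then show "\<exists>y. (q has_real_derivative y) (at u) \<and> 0 \<le> y" using nn[of u] u t by auto
  qed
qed

lemma grad_lower:
  fixes f :: "'a::real_inner \<Rightarrow> real" and G :: "'a \<Rightarrow> 'a" and H :: "'a \<Rightarrow> 'a \<Rightarrow> 'a"
  assumes S: "convex S" and x: "x \<in> S" and y: "y \<in> S"
   and df: "\<And>p. p \<in> S \<Longrightarrow> (f has_derivative (\<lambda>h. G p \<bullet> h)) (at p within S)"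
   and dG: "\<And>p. p \<in> S \<Longrightarrow> (G has_derivative H p) (at p within S)"
   and hb: "\<And>p. p \<in> S \<Longrightarrow> \<sigma> * (norm (y - x))^2 \<le> (y - x) \<bullet> H p (y - x)"
  shows "f x + G x \<bullet> (y - x) + \<sigma>/2 * (norm (y-x))^2 \<le> f y"
proof -
  define v where "v = y - x"
  define \<gamma> where "\<gamma> = (\<lambda>t::real. x + t *\<^sub>R v)"
  have \<gamma>S: "\<gamma> ` {0..1} \<subseteq> S"
  proof
    fix p assume "p \<in> \<gamma> ` {0..1}"
    then obtain t where t: "t \<in> {0..1}" "p = \<gamma> t" by auto
    have "(1 - t) *\<^sub>R x + t *\<^sub>R y \<in> S" using S x y t unfolding convex_alt by auto
    moreover have "(1 - t) *\<^sub>R x + t *\<^sub>R y = \<gamma> t" by (simp add: \<gamma>_def v_def algebra_simps)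
    ultimately show "p \<in> S" using t by simp
  qed
  have d\<gamma>: "\<And>t. (\<gamma> has_derivative (\<lambda>s. s *\<^sub>R v)) (at t within {0..1})"
    unfolding \<gamma>_def by (auto intro!: derivative_eq_intros)
  have d1: "((\<lambda>t. f (\<gamma> t)) has_real_derivative (G (\<gamma> t) \<bullet> v)) (at t within {0..1})"
    if t: "t \<in> {0..1}" for t
  proof -
    have "((\<lambda>t. f (\<gamma> t)) has_derivative (\<lambda>s. G (\<gamma> t) \<bullet> (s *\<^sub>R v))) (at t within {0..1})"
      by (rule has_derivative_in_compose2[OF df \<gamma>S t d\<gamma>])
    moreover have "(\<lambda>s. G (\<gamma> t) \<bullet> (s *\<^sub>R v)) = (*) (G (\<gamma> t) \<bullet> v)"
      by (auto simp: fun_eq_iff)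
    ultimately show ?thesis unfolding has_field_derivative_def by simp
  qed
  have d2: "((\<lambda>t. G (\<gamma> t) \<bullet> v) has_real_derivative (H (\<gamma> t) v \<bullet> v)) (at t within {0..1})"
    if t: "t \<in> {0..1}" for t
  proof -
    have "((\<lambda>t. G (\<gamma> t)) has_derivative (\<lambda>s. H (\<gamma> t) (s *\<^sub>R v))) (at t within {0..1})"
      by (rule has_derivative_in_compose2[OF dG \<gamma>S t d\<gamma>])
    then have "((\<lambda>t. G (\<gamma> t) \<bullet> v) has_derivative (\<lambda>s. H (\<gamma> t) (s *\<^sub>R v) \<bullet> v)) (at t within {0..1})"
      by (intro bounded_linear.has_derivative[OF bounded_linear_inner_left])
    moreover have "linear (H (\<gamma> t))"
      using dG \<gamma>S t has_derivative_linear by blast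
    ultimately have "(\<lambda>s. H (\<gamma> t) (s *\<^sub>R v) \<bullet> v) = (*) (H (\<gamma> t) v \<bullet> v)"
      by (auto simp: fun_eq_iff linear_scale)
    with \<open>((\<lambda>t. G (\<gamma> t) \<bullet> v) has_derivative _) _\<close> show ?thesis unfolding has_field_derivative_def by simp
  qed
  define q where "q = (\<lambda>t. G (\<gamma> t) \<bullet> v - G x \<bullet> v - \<sigma> * t * (norm v)^2)"
  have dq: "(q has_real_derivative (H (\<gamma> t) v \<bullet> v - \<sigma> * (norm v)^2)) (at t within {0..1})"
    if "t \<in> {0..1}" for t
    unfolding q_def by (rule derivative_eq_intros d2 that refl | simp)+
  have qnn: "q t \<ge> 0" if "t \<in> {0..1}" for t
  proof -
    have "q 0 \<le> q t"
    proof (rule mono01[OF dq _ that])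
      fix u :: real assume "0 < u" "u < 1"
      then have "\<gamma> u \<in> S" using \<gamma>S by auto
      then show "0 \<le> H (\<gamma> u) v \<bullet> v - \<sigma> * (norm v)^2"
        using hb[of "\<gamma> u"] by (simp add: v_def inner_commute)
    qed auto
    then show ?thesis by (simp add: q_def \<gamma>_def)
  qed
  define r where "r = (\<lambda>t. f (\<gamma> t) - f x - t * (G x \<bullet> v) - \<sigma>/2 * t^2 * (norm v)^2)"
  have dr: "(r has_real_derivative q t) (at t within {0..1})" if "t \<in> {0..1}" for t
    unfolding r_def q_def by (rule derivative_eq_intros d1 that refl | simp)+
  have "r 0 \<le> r 1"
    by (rule mono01[OF dr]) (use qnn in auto)
  then show ?thesis by (simp add: r_def \<gamma>_def v_def)
qed


lemma alg_id: "(1-t)*(a + t*g + s*(t^2*N)) + t*(a + -(1-t)*g + s*((1-t)^2*N)) = a + s*(t*(1-t))*N"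
  for t a g s N :: real
  by (simp add: algebra_simps power2_eq_square)

lemma convex_comb:
  fixes f :: "'a::real_inner \<Rightarrow> real" and G :: "'a \<Rightarrow> 'a"
  assumes gl: "\<And>x y. x \<in> S \<Longrightarrow> y \<in> S \<Longrightarrow> f x + G x \<bullet> (y - x) + \<sigma>/2 * (norm (y-x))^2 \<le> f y"
    and x: "x \<in> S" and y: "y \<in> S" and z: "(1 - t) *\<^sub>R x + t *\<^sub>R y \<in> S" and t: "0 \<le> t" "t \<le> 1"
  shows "f ((1 - t) *\<^sub>R x + t *\<^sub>R y) \<le> (1 - t) * f x + t * f y - \<sigma>/2 * (t * (1 - t)) * (norm (x - y))^2"
proof -
  define c where "c = (1 - t) *\<^sub>R x + t *\<^sub>R y"
  have cx: "x - c = t *\<^sub>R (x - y)" by (simp add: c_def algebra_simps)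
  have cy: "y - c = (1 - t) *\<^sub>R (y - x)" by (simp add: c_def algebra_simps)
  have 1: "f c + G c \<bullet> (x - c) + \<sigma>/2 * (norm (x - c))^2 \<le> f x" using gl[of c x] z x c_def by simp
  have 2: "f c + G c \<bullet> (y - c) + \<sigma>/2 * (norm (y - c))^2 \<le> f y" using gl[of c y] z y c_def by simp
  have n1: "(norm (x - c))^2 = t^2 * (norm (x - y))^2" using t by (simp add: cx power_mult_distrib)
  have n2: "(norm (y - c))^2 = (1-t)^2 * (norm (x - y))^2" using t by (simp add: cy power_mult_distrib norm_minus_commute)
  have g1: "G c \<bullet> (x - c) = t * (G c \<bullet> (x - y))" by (simp add: cx)
  have g2: "G c \<bullet> (y - c) = - (1 - t) * (G c \<bullet> (x - y))"
    by (simp add: cy inner_diff_right algebra_simps)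
  have "(1 - t) * (f c + G c \<bullet> (x - c) + \<sigma>/2 * (norm (x - c))^2) + t * (f c + G c \<bullet> (y - c) + \<sigma>/2 * (norm (y - c))^2)
     \<le> (1 - t) * f x + t * f y"
    using 1 2 t by (intro add_mono mult_left_mono) auto
  then have "(1 - t) * (f c + t * (G c \<bullet> (x - y)) + \<sigma>/2 * (t^2 * (norm (x - y))^2)) + t * (f c + - (1 - t) * (G c \<bullet> (x - y)) + \<sigma>/2 * ((1-t)^2 * (norm (x - y))^2))
     \<le> (1 - t) * f x + t * f y" unfolding n1 n2 g1 g2 .
  moreover have "(1 - t) * (f c + t * (G c \<bullet> (x - y)) + \<sigma>/2 * (t^2 * (norm (x - y))^2)) + t * (f c + - (1 - t) * (G c \<bullet> (x - y)) + \<sigma>/2 * ((1-t)^2 * (norm (x - y))^2))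
     = f c + \<sigma>/2 * (t * (1 - t)) * (norm (x - y))^2"
    using alg_id[of t "f c" "G c \<bullet> (x - y)" "\<sigma>/2" "(norm (x - y))^2"] by simp
  ultimately show ?thesis unfolding c_def by linarith
qed

lemma norm_blocks:
  fixes w :: "real^'n" and blk :: "'n \<Rightarrow> 'b::finite"
  shows "(\<Sum>i\<in>UNIV. (norm (blockproj blk i w))^2) = (norm w)^2"
proof -
  have "(\<Sum>i\<in>UNIV. (norm (blockproj blk i w))^2) = (\<Sum>i\<in>UNIV. \<Sum>j\<in>UNIV. (if blk j = i then (w $ j)^2 else 0))"
    unfolding power2_norm_eq_inner inner_vec_def blockproj_def
    by (auto simp: power2_eq_square intro!: sum.cong)
  also have "\<dots> = (\<Sum>j\<in>UNIV. \<Sum>i\<in>UNIV. (if blk j = i then (w $ j)^2 else 0))"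
    by (rule sum.swap)
  also have "\<dots> = (\<Sum>j\<in>UNIV. (w $ j)^2)" by simp
  also have "\<dots> = (norm w)^2" unfolding power2_norm_eq_inner inner_vec_def by (simp add: power2_eq_square)
  finally show ?thesis .
qed

lemma frob_bound:
  fixes R :: "real^'n^'m"
  shows "norm (R *v w) \<le> frob_norm R * norm w"
proof -
  have "(norm (R *v w))^2 = (\<Sum>i\<in>UNIV. ((R $ i) \<bullet> w)^2)"
    by (simp add: norm_vec_def L2_set_def matrix_vector_mult_def inner_vec_def sum_nonneg)
  also have "\<dots> \<le> (\<Sum>i\<in>UNIV. (norm (R $ i))^2 * (norm w)^2)"
  proof (rule sum_mono)
    fix i
    have "\<bar>(R $ i) \<bullet> w\<bar> \<le> norm (R $ i) * norm w" by (rule Cauchy_Schwarz_ineq2)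
    then have "\<bar>(R $ i) \<bullet> w\<bar>^2 \<le> (norm (R $ i) * norm w)^2" by (rule power_mono) simp
    then show "((R $ i) \<bullet> w)^2 \<le> (norm (R $ i))^2 * (norm w)^2" by (simp add: power_mult_distrib)
  qed
  also have "\<dots> = (frob_norm R * norm w)^2"
    by (simp add: frob_norm_def power_mult_distrib sum_distrib_right norm_vec_def L2_set_def sum_nonneg)
  finally show ?thesis
    by (rule power2_le_imp_le) (auto simp: frob_norm_def intro!: mult_nonneg_nonneg sum_nonneg)
qed



theorem corollary1:
  fixes blk :: "'n::finite \<Rightarrow> 'b::finite"
    and Zb :: "'b \<Rightarrow> (real^'n) set"
    and C :: "'b \<Rightarrow> real^'n \<Rightarrow> real"
    and G :: "'b \<Rightarrow> real^'n \<Rightarrow> real^'n"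
    and Hs :: "'b \<Rightarrow> real^'n \<Rightarrow> real^'n \<Rightarrow> real^'n"
    and R :: "real^'n^'m::finite" and g0 :: "real^'m"
    and \<sigma>c \<sigma>g \<sigma>h \<phi> \<epsilon> :: real
    and zs :: "real^'n" and \<mu>s :: "real^'m"
    and z :: "nat \<Rightarrow> real^'n" and \<mu> :: "nat \<Rightarrow> real^'m"
  defines "Z \<equiv> prodset blk Zb"
    and "L \<equiv> Lagr C blk R g0 \<phi>"
  assumes Zb_sub: "\<And>i. Zb i \<subseteq> blockspace blk i"
    and Zb_ne: "\<And>i. Zb i \<noteq> {}"
    and Zb_convex: "\<And>i. convex (Zb i)"
    and Zb_compact: "\<And>i. compact (Zb i)"
    and \<sigma>c_pos: "\<sigma>c > 0"
    and grad_in: "\<And>i x. x \<in> Zb i \<Longrightarrow> G i x \<in> blockspace blk i"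
    and grad: "\<And>i x. x \<in> Zb i \<Longrightarrow> (C i has_derivative (\<lambda>h. G i x \<bullet> h)) (at x within Zb i)"
    and hess: "\<And>i x. x \<in> Zb i \<Longrightarrow> (G i has_derivative Hs i x) (at x within Zb i)"
    and hess_lb: "\<And>i x h. x \<in> Zb i \<Longrightarrow> h \<in> blockspace blk i \<Longrightarrow>
                     h \<bullet> Hs i x h \<ge> \<sigma>c * (norm h)^2"
    and grad_lip: "\<And>i. \<exists>Lc. \<forall>x\<in>Zb i. \<forall>y\<in>Zb i. norm (G i x - G i y) \<le> Lc * norm (x - y)"
    and \<sigma>g_pos: "\<sigma>g > 0"
    and R_bound: "frob_norm R \<le> \<sigma>g"
    and slater: "\<exists>z0\<in>Z. \<forall>j. (R *v z0 + g0) $ j < 0"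
    and \<phi>_pos: "\<phi> > 0"
    and saddle: "zs \<in> Z" "nonneg \<mu>s"
       "\<And>zz \<nu>. zz \<in> Z \<Longrightarrow> nonneg \<nu> \<Longrightarrow> L zs \<nu> \<le> L zs \<mu>s \<and> L zs \<mu>s \<le> L zz \<mu>s"
    and \<sigma>h_pos: "\<sigma>h > 0"
    and \<sigma>h: "\<And>\<nu> \<nu>'. nonneg \<nu> \<Longrightarrow> nonneg \<nu>' \<Longrightarrow>
        frechet_derivative (\<lambda>\<eta>. INF zz\<in>Z. L zz \<eta>) (at \<nu>) (\<nu> - \<nu>')
      - frechet_derivative (\<lambda>\<eta>. INF zz\<in>Z. L zz \<eta>) (at \<nu>') (\<nu> - \<nu>')
      \<le> - \<sigma>h * (norm (\<nu> - \<nu>'))^2"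
    and init: "nonneg (\<mu> 1)"
    and z_step: "\<And>k. k \<ge> 1 \<Longrightarrow> z (k + 1) \<in> Z \<and> (\<forall>zz\<in>Z. L (z (k + 1)) (\<mu> k) \<le> L zz (\<mu> k))"
    and \<mu>_step: "\<And>k. k \<ge> 1 \<Longrightarrow>
        \<mu> (k + 1) = posproj (\<mu> k + \<epsilon> *\<^sub>R ((R *v z (k + 1) + g0) - \<phi> *\<^sub>R \<mu> k))"
    and \<epsilon>_pos: "0 < \<epsilon>"
    and \<epsilon>_bound: "\<epsilon> < 2 * \<sigma>h / (\<sigma>g^2 / \<sigma>c + \<phi>)^2"
  shows "(\<lambda>k. (norm (\<mu> k - \<mu>s))^2) \<longlonglongrightarrow> 0 \<and>
         (\<lambda>k. (norm (z k - zs))^2) \<longlonglongrightarrow> 0"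
  proof -
  define SC where "SC = (\<lambda>zz. \<Sum>i\<in>UNIV. C i (blockproj blk i zz))"
  have Ldef: "\<And>zz \<eta>. L zz \<eta> = SC zz + \<eta> \<bullet> (R *v zz + g0) - \<phi>/2 * (norm \<eta>)^2"
    by (simp add: L_def Lagr_def SC_def)
  have Zmem: "\<And>zz. zz \<in> Z \<longleftrightarrow> (\<forall>i. blockproj blk i zz \<in> Zb i)" by (simp add: Z_def prodset_def)
  have Plin: "\<And>i a b t. blockproj blk i ((1-t) *\<^sub>R a + t *\<^sub>R b) = (1-t) *\<^sub>R blockproj blk i a + t *\<^sub>R blockproj blk i b"
    by (simp add: blockproj_def vec_eq_iff)
  have Pdiff: "\<And>i a b. blockproj blk i (a - b) = blockproj blk i a - blockproj blk i b"
    by (simp add: blockproj_def vec_eq_iff)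
  have Zconv: "\<And>a b t. a \<in> Z \<Longrightarrow> b \<in> Z \<Longrightarrow> 0 \<le> t \<Longrightarrow> t \<le> 1 \<Longrightarrow> (1-t) *\<^sub>R a + t *\<^sub>R b \<in> Z"
    unfolding Zmem Plin using Zb_convex by (auto simp: convex_alt)
  have Cgl: "C i x + G i x \<bullet> (y - x) + \<sigma>c/2 * (norm (y-x))^2 \<le> C i y"
    if x: "x \<in> Zb i" and y: "y \<in> Zb i" for i x y
  proof -
    have "y - x \<in> blockspace blk i" using Zb_sub x y by (auto simp: blockspace_def subset_iff)
    then show ?thesis by (intro grad_lower[OF Zb_convex x y grad hess]) (auto intro: hess_lb)
  qed
  have SCcomb: "SC ((1-t) *\<^sub>R a + t *\<^sub>R b) \<le> (1-t) * SC a + t * SC b - \<sigma>c/2 * (t * (1-t)) * (norm (a - b))^2"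
    if a: "a \<in> Z" and b: "b \<in> Z" and t: "0 \<le> t" "t \<le> 1" for a b t
  proof -
    have "SC ((1-t) *\<^sub>R a + t *\<^sub>R b) = (\<Sum>i\<in>UNIV. C i ((1-t) *\<^sub>R blockproj blk i a + t *\<^sub>R blockproj blk i b))"
      by (simp add: SC_def Plin)
    also have "\<dots> \<le> (\<Sum>i\<in>UNIV. (1-t) * C i (blockproj blk i a) + t * C i (blockproj blk i b)
        - \<sigma>c/2 * (t * (1-t)) * (norm (blockproj blk i a - blockproj blk i b))^2)"
    proof (rule sum_mono)
      fix i
      have "(1-t) *\<^sub>R a + t *\<^sub>R b \<in> Z" using Zconv a b t by blast
      then have "(1-t) *\<^sub>R blockproj blk i a + t *\<^sub>R blockproj blk i b \<in> Zb i"
        unfolding Zmem Plin by blast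
      then show "C i ((1-t) *\<^sub>R blockproj blk i a + t *\<^sub>R blockproj blk i b) \<le> (1-t) * C i (blockproj blk i a) + t * C i (blockproj blk i b)
        - \<sigma>c/2 * (t * (1-t)) * (norm (blockproj blk i a - blockproj blk i b))^2"
        using a b t Zmem by (intro convex_comb[where S="Zb i" and G="G i"] Cgl) auto
    qed
    also have "\<dots> = (1-t) * SC a + t * SC b - \<sigma>c/2 * (t * (1-t)) * (\<Sum>i\<in>UNIV. (norm (blockproj blk i (a - b)))^2)"
      by (simp add: SC_def sum.distrib sum_subtractf sum_distrib_left Pdiff)
    also have "\<dots> = (1-t) * SC a + t * SC b - \<sigma>c/2 * (t * (1-t)) * (norm (a - b))^2"
      by (simp add: norm_blocks)
    finally show ?thesis .
  qed
  have Lcomb: "L ((1-t) *\<^sub>R a + t *\<^sub>R b) \<eta> \<le> (1-t) * L a \<eta> + t * L b \<eta> - \<sigma>c/2 * (t * (1-t)) * (norm (a - b))^2"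
    if a: "a \<in> Z" and b: "b \<in> Z" and t: "0 \<le> t" "t \<le> 1" for a b t \<eta>
  proof -
    have "\<eta> \<bullet> (R *v ((1-t) *\<^sub>R a + t *\<^sub>R b) + g0) = (1-t) * (\<eta> \<bullet> (R *v a + g0)) + t * (\<eta> \<bullet> (R *v b + g0))"
      by (simp add: matrix_vector_right_distrib matrix_vector_mult_scaleR inner_add_right algebra_simps)
    moreover have "(1-t) * L a \<eta> + t * L b \<eta> = (1-t) * SC a + t * SC b
        + ((1-t) * (\<eta> \<bullet> (R *v a + g0)) + t * (\<eta> \<bullet> (R *v b + g0))) - \<phi>/2 * (norm \<eta>)^2"
      unfolding Ldef by (simp add: algebra_simps) (simp add: field_simps)
    moreover have "L ((1-t) *\<^sub>R a + t *\<^sub>R b) \<eta> = SC ((1-t) *\<^sub>R a + t *\<^sub>R b)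
        + \<eta> \<bullet> (R *v ((1-t) *\<^sub>R a + t *\<^sub>R b) + g0) - \<phi>/2 * (norm \<eta>)^2"
      by (rule Ldef)
    ultimately show ?thesis using SCcomb[OF a b t] by linarith
  qed
  have QG: "L a \<eta> + \<sigma>c/2 * (norm (b - a))^2 \<le> L b \<eta>"
    if a: "a \<in> Z" and amin: "\<forall>zz\<in>Z. L a \<eta> \<le> L zz \<eta>" and b: "b \<in> Z" for \<eta> a b
  proof -
    have ineq: "L a \<eta> + \<sigma>c/2 * (1 - inverse (real (Suc n))) * (norm (b - a))^2 \<le> L b \<eta>" for n
    proof -
      define t where "t = inverse (real (Suc n))"
      have t: "0 < t" "t \<le> 1" by (auto simp: t_def field_simps)
      have "L a \<eta> \<le> L ((1-t) *\<^sub>R a + t *\<^sub>R b) \<eta>" using amin Zconv[OF a b] t by auto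
      also have "\<dots> \<le> (1-t) * L a \<eta> + t * L b \<eta> - \<sigma>c/2 * (t * (1-t)) * (norm (a - b))^2"
        using Lcomb[OF a b] t by auto
      finally have "t * (L a \<eta> + \<sigma>c/2 * (1 - t) * (norm (b - a))^2) \<le> t * L b \<eta>"
        by (simp add: algebra_simps norm_minus_commute)
      then show ?thesis using t unfolding t_def[symmetric] by simp
    qed
    have "(\<lambda>n. L a \<eta> + \<sigma>c/2 * (1 - inverse (real (Suc n))) * (norm (b - a))^2)
        \<longlonglongrightarrow> L a \<eta> + \<sigma>c/2 * (1 - 0) * (norm (b - a))^2"
      by (intro tendsto_intros LIMSEQ_inverse_real_of_nat)
    then have "L a \<eta> + \<sigma>c/2 * (1 - 0) * (norm (b - a))^2 \<le> L b \<eta>"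
      by (rule LIMSEQ_le_const2) (use ineq in auto)
    then show ?thesis by simp
  qed
  have Rb: "norm (R *v w) \<le> \<sigma>g * norm w" for w
    using frob_bound[of R w] R_bound by (meson mult_right_mono norm_ge_zero order_trans)
  have Ldiff: "L zz \<eta> - L zz \<eta>' = (\<eta> - \<eta>') \<bullet> (R *v zz + g0) - \<phi>/2 * ((norm \<eta>)^2 - (norm \<eta>')^2)" for zz \<eta> \<eta>'
    unfolding Ldef by (simp add: algebra_simps inner_diff_left)
  have Lip: "norm (a - b) \<le> \<sigma>g / \<sigma>c * norm (\<eta> - \<eta>')"
    if a: "a \<in> Z" and amin: "\<forall>zz\<in>Z. L a \<eta> \<le> L zz \<eta>"
      and b: "b \<in> Z" and bmin: "\<forall>zz\<in>Z. L b \<eta>' \<le> L zz \<eta>'" for \<eta> \<eta>' a b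
  proof -
    have 1: "L a \<eta> + \<sigma>c/2 * (norm (b - a))^2 \<le> L b \<eta>" by (rule QG[OF a amin b])
    have 2: "L b \<eta>' + \<sigma>c/2 * (norm (a - b))^2 \<le> L a \<eta>'" by (rule QG[OF b bmin a])
    have eq: "(L b \<eta> - L b \<eta>') - (L a \<eta> - L a \<eta>') = (\<eta> - \<eta>') \<bullet> (R *v (b - a))"
      unfolding Ldiff by (simp add: matrix_vector_mult_diff_distrib inner_diff_right inner_add_right)
    have "\<sigma>c * (norm (a - b))^2 \<le> (\<eta> - \<eta>') \<bullet> (R *v (b - a))"
      using 1 2 eq by (simp add: norm_minus_commute)
    also have "\<dots> \<le> norm (\<eta> - \<eta>') * norm (R *v (b - a))" by (rule norm_cauchy_schwarz)
    also have "\<dots> \<le> norm (\<eta> - \<eta>') * (\<sigma>g * norm (a - b))"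
      using Rb[of "b - a"] by (intro mult_left_mono) (auto simp: norm_minus_commute)
    finally have *: "\<sigma>c * (norm (a - b))^2 \<le> norm (\<eta> - \<eta>') * (\<sigma>g * norm (a - b))" .
    show ?thesis
    proof (cases "a = b")
      case True then show ?thesis using \<sigma>g_pos \<sigma>c_pos by simp
    next
      case False
      then have "norm (a - b) > 0" by simp
      then have "\<sigma>c * norm (a - b) \<le> norm (\<eta> - \<eta>') * \<sigma>g"
        using * by (simp add: power2_eq_square algebra_simps)
      then show ?thesis using \<sigma>c_pos by (simp add: pos_le_divide_eq algebra_simps)
    qed
  qed
  have Zne: "Z \<noteq> {}" using saddle(1) by auto
  have hder: "frechet_derivative (\<lambda>\<eta>. INF zz\<in>Z. L zz \<eta>) (at \<nu>) = (\<lambda>d. (R *v a + g0 - \<phi> *\<^sub>R \<nu>) \<bullet> d)"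
    if a: "a \<in> Z" and amin: "\<forall>zz\<in>Z. L a \<nu> \<le> L zz \<nu>" for \<nu> a
  proof -
    define K where "K = \<sigma>g^2 / (2 * \<sigma>c)"
    have K: "K \<ge> 0" using \<sigma>c_pos by (simp add: K_def)
    have lower: "L a y - K * (norm (y - \<nu>))^2 \<le> L zz y" if zz: "zz \<in> Z" for zz y
    proof -
      define s where "s = norm (zz - a)"
      define e where "e = norm (y - \<nu>)"
      have "L zz y - L a y = (L zz \<nu> - L a \<nu>) + (y - \<nu>) \<bullet> (R *v (zz - a))"
      proof -
        have "L zz y - L zz \<nu> = (y - \<nu>) \<bullet> (R *v zz + g0) - \<phi>/2 * ((norm y)^2 - (norm \<nu>)^2)" by (rule Ldiff)
        moreover have "L a y - L a \<nu> = (y - \<nu>) \<bullet> (R *v a + g0) - \<phi>/2 * ((norm y)^2 - (norm \<nu>)^2)" by (rule Ldiff)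
        ultimately show ?thesis
          by (simp add: matrix_vector_mult_diff_distrib inner_diff_right inner_add_right)
      qed
      moreover have "L zz \<nu> - L a \<nu> \<ge> \<sigma>c/2 * s^2" using QG[OF a amin zz] by (simp add: s_def)
      moreover have "(y - \<nu>) \<bullet> (R *v (zz - a)) \<ge> - (e * (\<sigma>g * s))"
      proof -
        have "\<bar>(y - \<nu>) \<bullet> (R *v (zz - a))\<bar> \<le> e * norm (R *v (zz - a))"
          unfolding e_def by (rule Cauchy_Schwarz_ineq2)
        also have "\<dots> \<le> e * (\<sigma>g * s)" unfolding s_def e_def by (intro mult_left_mono Rb) auto
        finally show ?thesis by linarith
      qed
      moreover have "\<sigma>c/2 * s^2 - e * (\<sigma>g * s) \<ge> - K * e^2"
      proof -
        have "0 \<le> (\<sigma>c * s - \<sigma>g * e)^2 / (2 * \<sigma>c)" using \<sigma>c_pos by simp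
        also have "(\<sigma>c * s - \<sigma>g * e)^2 / (2 * \<sigma>c) = \<sigma>c/2 * s^2 - e * (\<sigma>g * s) + K * e^2"
          using \<sigma>c_pos by (simp add: K_def field_simps power2_eq_square)
        finally show ?thesis by linarith
      qed
      ultimately show ?thesis unfolding e_def by linarith
    qed
    have bdd: "bdd_below ((\<lambda>zz. L zz y) ` Z)" for y
      using lower by (auto intro!: bdd_belowI[where m="L a y - K * (norm (y - \<nu>))^2"])
    have hup: "(INF zz\<in>Z. L zz y) \<le> L a y" for y
      by (rule cINF_lower[OF bdd a])
    have hlo: "L a y - K * (norm (y - \<nu>))^2 \<le> (INF zz\<in>Z. L zz y)" for y
      by (rule cINF_greatest[OF Zne lower])
    have h0: "(INF zz\<in>Z. L zz \<nu>) = L a \<nu>" using hup[of \<nu>] hlo[of \<nu>] by simp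
    have La: "L a y - L a \<nu> - (R *v a + g0 - \<phi> *\<^sub>R \<nu>) \<bullet> (y - \<nu>) = - \<phi>/2 * (norm (y - \<nu>))^2" for y
      unfolding Ldiff by (simp add: power2_norm_eq_inner inner_diff_left inner_diff_right inner_commute algebra_simps)
    have rem: "\<bar>(INF zz\<in>Z. L zz y) - (INF zz\<in>Z. L zz \<nu>) - (R *v a + g0 - \<phi> *\<^sub>R \<nu>) \<bullet> (y - \<nu>)\<bar>
        \<le> (K + \<phi>/2) * (norm (y - \<nu>))^2" for y
    proof -
      define n where "n = (norm (y - \<nu>))^2"
      have n: "0 \<le> n" by (simp add: n_def)
      have 1: "0 \<le> K * n" "0 \<le> \<phi>/2 * n" using n K \<phi>_pos by auto
      have 2: "(K + \<phi>/2) * n = K * n + \<phi>/2 * n" "- \<phi>/2 * n = - (\<phi>/2 * n)" by (simp_all add: algebra_simps)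
      show ?thesis using hup[of y] hlo[of y] La[of y] h0 1 2 unfolding n_def[symmetric] abs_le_iff by linarith
    qed
    have "((\<lambda>\<eta>. INF zz\<in>Z. L zz \<eta>) has_derivative (\<lambda>d. (R *v a + g0 - \<phi> *\<^sub>R \<nu>) \<bullet> d)) (at \<nu>)"
      unfolding has_derivative_at_alt
    proof (intro conjI allI impI)
      show "bounded_linear (\<lambda>d. (R *v a + g0 - \<phi> *\<^sub>R \<nu>) \<bullet> d)" by (rule bounded_linear_inner_right)
      fix e :: real assume e: "e > 0"
      define d where "d = e / (K + \<phi>/2)"
      have Kp: "K + \<phi>/2 > 0" using K \<phi>_pos by simp
      have d: "d > 0" using e Kp by (simp add: d_def)
      show "\<exists>d>0. \<forall>y. norm (y - \<nu>) < d \<longrightarrow> norm ((INF zz\<in>Z. L zz y) - (INF zz\<in>Z. L zz \<nu>) - (R *v a + g0 - \<phi> *\<^sub>R \<nu>) \<bullet> (y - \<nu>)) \<le> e * norm (y - \<nu>)"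
      proof (intro exI[of _ d] conjI allI impI d)
        fix y assume y: "norm (y - \<nu>) < d"
        have "(K + \<phi>/2) * (norm (y - \<nu>))^2 = ((K + \<phi>/2) * norm (y - \<nu>)) * norm (y - \<nu>)"
          by (simp add: power2_eq_square)
        also have "\<dots> \<le> e * norm (y - \<nu>)"
        proof (rule mult_right_mono)
          have "(K + \<phi>/2) * norm (y - \<nu>) \<le> (K + \<phi>/2) * d" using y Kp by simp
          also have "\<dots> = e" using Kp by (simp add: d_def)
          finally show "(K + \<phi>/2) * norm (y - \<nu>) \<le> e" .
        qed simp
        finally show "norm ((INF zz\<in>Z. L zz y) - (INF zz\<in>Z. L zz \<nu>) - (R *v a + g0 - \<phi> *\<^sub>R \<nu>) \<bullet> (y - \<nu>)) \<le> e * norm (y - \<nu>)"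
          using rem[of y] by simp
      qed
    qed
    then show ?thesis by (rule frechet_derivative_at[symmetric])
  qed
  have mono_h: "(R *v a + g0 - \<phi> *\<^sub>R \<nu> - (R *v b + g0 - \<phi> *\<^sub>R \<nu>')) \<bullet> (\<nu> - \<nu>') \<le> - \<sigma>h * (norm (\<nu> - \<nu>'))^2"
    if "nonneg \<nu>" "nonneg \<nu>'" and a: "a \<in> Z" and amin: "\<forall>zz\<in>Z. L a \<nu> \<le> L zz \<nu>"
      and b: "b \<in> Z" and bmin: "\<forall>zz\<in>Z. L b \<nu>' \<le> L zz \<nu>'" for \<nu> \<nu>' a b
  proof -
    have X: "(R *v a + g0 - \<phi> *\<^sub>R \<nu>) \<bullet> (\<nu> - \<nu>') - (R *v b + g0 - \<phi> *\<^sub>R \<nu>') \<bullet> (\<nu> - \<nu>') \<le> - \<sigma>h * (norm (\<nu> - \<nu>'))^2"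
      using \<sigma>h[OF that(1,2)] unfolding hder[OF a amin] hder[OF b bmin] by (simp only:)
    show ?thesis using X by (simp only: inner_diff_left[of "R *v a + g0 - \<phi> *\<^sub>R \<nu>"])
  qed
  have \<mu>nn: "nonneg (\<mu> (Suc k))" for k
  proof (induction k)
    case 0 then show ?case using init by simp
  next
    case (Suc k)
    have "\<mu> (Suc (Suc k)) = \<mu> (Suc k + 1)" by simp
    also have "\<dots> = posproj (\<mu> (Suc k) + \<epsilon> *\<^sub>R ((R *v z (Suc k + 1) + g0) - \<phi> *\<^sub>R \<mu> (Suc k)))"
      by (rule \<mu>_step) simp
    finally show ?case by (simp add: nonneg_def posproj_def)
  qed
  have smin: "\<forall>zz\<in>Z. L zs \<mu>s \<le> L zz \<mu>s" using saddle(3)[OF _ saddle(2)] by blast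
  define c where "c = R *v zs + g0"
  have comp: "\<mu>s $ j = max 0 (c $ j / \<phi>)" for j
  proof -
    define m where "m = \<mu>s $ j"
    define x where "x = max 0 (c $ j / \<phi>)"
    define \<nu> where "\<nu> = \<mu>s + axis j (x - m)"
    have m: "m \<ge> 0" using saddle(2) by (simp add: nonneg_def m_def)
    have nn: "nonneg \<nu>" using saddle(2) unfolding nonneg_def \<nu>_def
      by (auto simp: axis_def m_def x_def)
    have "L zs \<nu> \<le> L zs \<mu>s" using saddle(3)[OF saddle(1) nn] by blast
    then have le: "(\<nu> - \<mu>s) \<bullet> c - \<phi>/2 * ((norm \<nu>)^2 - (norm \<mu>s)^2) \<le> 0"
      using Ldiff[of zs \<nu> \<mu>s] unfolding c_def by linarith
    have e1: "(\<nu> - \<mu>s) \<bullet> c = (x - m) * c $ j"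
      by (simp add: \<nu>_def inner_axis')
    have e2: "(norm \<nu>)^2 - (norm \<mu>s)^2 = 2 * m * (x - m) + (x - m)^2"
      unfolding power2_norm_eq_inner by (simp add: \<nu>_def inner_add_left inner_add_right inner_axis inner_axis' inner_axis_axis m_def inner_commute power2_eq_square)
    have key: "\<phi>/2 * (x - m)^2 \<le> (x - m) * c $ j - \<phi>/2 * (2 * m * (x - m) + (x - m)^2)"
    proof (cases "c $ j \<ge> 0")
      case True
      then have x: "x = c $ j / \<phi>" using \<phi>_pos by (simp add: x_def max_def)
      then have cx: "c $ j = \<phi> * x" using \<phi>_pos by simp
      show ?thesis unfolding cx by (simp add: algebra_simps power2_eq_square)
    next
      case False
      have "c $ j / \<phi> < 0" using False \<phi>_pos by (simp add: divide_neg_pos)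
      then have x: "x = 0" by (simp add: x_def max_def)
      have "0 \<le> - m * c $ j" using m False by (simp add: mult_nonneg_nonpos)
      then show ?thesis unfolding x by (simp add: algebra_simps power2_eq_square)
    qed
    have "\<phi>/2 * (x - m)^2 \<le> 0" using key le unfolding e1 e2 by linarith
    then have "(x - m)^2 \<le> 0" using \<phi>_pos by (simp add: mult_le_0_iff)
    then have "x = m" by simp
    then show ?thesis by (simp add: m_def x_def)
  qed
  have fixp: "posproj (\<mu>s + \<epsilon> *\<^sub>R (c - \<phi> *\<^sub>R \<mu>s)) = \<mu>s"
  proof -
    have "max 0 (\<mu>s $ j + \<epsilon> * (c $ j - \<phi> * \<mu>s $ j)) = \<mu>s $ j" for j
    proof (cases "c $ j \<ge> 0")
      case True
      then have "\<mu>s $ j = c $ j / \<phi>" using comp[of j] \<phi>_pos by (simp add: max_def)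
      then have "c $ j - \<phi> * \<mu>s $ j = 0" using \<phi>_pos by simp
      then show ?thesis using comp[of j] by simp
    next
      case False
      have "c $ j / \<phi> < 0" using False \<phi>_pos by (simp add: divide_neg_pos)
      then have "\<mu>s $ j = 0" using comp[of j] by (simp add: max_def)
      moreover have "\<epsilon> * c $ j < 0" using False \<epsilon>_pos by (simp add: mult_pos_neg)
      ultimately show ?thesis by (simp add: max_def)
    qed
    then show ?thesis by (simp add: posproj_def vec_eq_iff)
  qed
  define Lc where "Lc = \<sigma>g^2 / \<sigma>c + \<phi>"
  have Lc: "Lc > 0"
  proof -
    have "\<sigma>g^2 / \<sigma>c \<ge> 0" using \<sigma>c_pos by simp
    then show ?thesis using \<phi>_pos by (simp add: Lc_def)
  qed
  define \<rho> where "\<rho> = 1 - 2 * \<epsilon> * \<sigma>h + \<epsilon>^2 * Lc^2"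
  have \<rho>1: "\<rho> < 1"
  proof -
    have "\<epsilon> * Lc^2 < 2 * \<sigma>h" using \<epsilon>_bound Lc by (simp add: Lc_def pos_less_divide_eq)
    then have "\<epsilon> * (\<epsilon> * Lc^2) < \<epsilon> * (2 * \<sigma>h)" using \<epsilon>_pos by simp
    then show ?thesis by (simp add: \<rho>_def power2_eq_square algebra_simps)
  qed
  define r where "r = max 0 \<rho>"
  have r: "0 \<le> r" "r < 1" using \<rho>1 by (auto simp: r_def)
  have zmin: "z (k + 1) \<in> Z" "\<forall>zz\<in>Z. L (z (k + 1)) (\<mu> k) \<le> L zz (\<mu> k)" if "k \<ge> 1" for k
    using z_step[OF that] by auto
  have sq: "(norm (u + v))^2 = (norm u)^2 + 2 * (v \<bullet> u) + (norm v)^2" for u v :: "real^'m"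
    unfolding power2_norm_eq_inner by (simp add: inner_add_left inner_add_right inner_commute)
  have step: "(norm (\<mu> (k + 1) - \<mu>s))^2 \<le> r * (norm (\<mu> k - \<mu>s))^2" if k: "k \<ge> 1" for k
  proof -
    define a where "a = z (k + 1)"
    have a: "a \<in> Z" and amin: "\<forall>zz\<in>Z. L a (\<mu> k) \<le> L zz (\<mu> k)" using zmin[OF k] by (auto simp: a_def)
    have nnk: "nonneg (\<mu> k)" using \<mu>nn[of "k - 1"] k by simp
    define \<Delta> where "\<Delta> = \<mu> k - \<mu>s"
    define E where "E = (R *v a + g0 - \<phi> *\<^sub>R \<mu> k) - (c - \<phi> *\<^sub>R \<mu>s)"
    define X where "X = \<mu> k + \<epsilon> *\<^sub>R ((R *v a + g0) - \<phi> *\<^sub>R \<mu> k)"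
    define Y where "Y = \<mu>s + \<epsilon> *\<^sub>R (c - \<phi> *\<^sub>R \<mu>s)"
    have muk1: "\<mu> (k + 1) = posproj X" using \<mu>_step[OF k] by (simp add: X_def a_def)
    have mus: "\<mu>s = posproj Y" using fixp by (simp add: Y_def)
    have XY: "X - Y = \<Delta> + \<epsilon> *\<^sub>R E" by (simp add: X_def Y_def \<Delta>_def E_def algebra_simps)
    have "norm (\<mu> (k + 1) - \<mu>s) \<le> norm (X - Y)"
      unfolding muk1 mus
    proof (rule norm_le_componentwise_cart)
      fix i
      show "norm ((posproj X - posproj Y) $ i) \<le> norm ((X - Y) $ i)"
        by (simp add: posproj_def max_def abs_if)
    qed
    then have 1: "(norm (\<mu> (k + 1) - \<mu>s))^2 \<le> (norm (X - Y))^2" by (simp add: power_mono)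
    have 2: "(norm (X - Y))^2 = (norm \<Delta>)^2 + 2 * \<epsilon> * (E \<bullet> \<Delta>) + \<epsilon>^2 * (norm E)^2"
      unfolding XY sq by (simp add: power_mult_distrib)
    have 3: "E \<bullet> \<Delta> \<le> - \<sigma>h * (norm \<Delta>)^2"
      using mono_h[OF nnk saddle(2) a amin saddle(1) smin] by (simp add: E_def \<Delta>_def c_def)
    have "norm E \<le> Lc * norm \<Delta>"
    proof -
      have "E = R *v (a - zs) - \<phi> *\<^sub>R \<Delta>"
        by (simp add: E_def \<Delta>_def c_def matrix_vector_mult_diff_distrib algebra_simps)
      then have "norm E \<le> norm (R *v (a - zs)) + norm (\<phi> *\<^sub>R \<Delta>)"
        using norm_triangle_ineq4 by metis
      also have "\<dots> \<le> \<sigma>g * norm (a - zs) + \<phi> * norm \<Delta>" using Rb[of "a - zs"] \<phi>_pos by simp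
      also have "\<dots> \<le> \<sigma>g * (\<sigma>g / \<sigma>c * norm \<Delta>) + \<phi> * norm \<Delta>"
        using mult_left_mono[OF Lip[OF a amin saddle(1) smin], of \<sigma>g] \<sigma>g_pos by (simp add: \<Delta>_def)
      also have "\<dots> = Lc * norm \<Delta>" by (simp add: Lc_def power2_eq_square algebra_simps)
      finally show ?thesis .
    qed
    then have 4: "(norm E)^2 \<le> Lc^2 * (norm \<Delta>)^2"
      by (metis norm_ge_zero power_mono power_mult_distrib)
    have "(norm (\<mu> (k + 1) - \<mu>s))^2 \<le> (norm \<Delta>)^2 + 2 * \<epsilon> * (- \<sigma>h * (norm \<Delta>)^2) + \<epsilon>^2 * (Lc^2 * (norm \<Delta>)^2)"
      using 1 2 3 4 \<epsilon>_pos
      by (smt (verit, best) mult_left_mono zero_le_power2 mult_pos_pos)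
    also have "\<dots> = \<rho> * (norm \<Delta>)^2" by (simp add: \<rho>_def algebra_simps)
    also have "\<dots> \<le> r * (norm \<Delta>)^2" by (simp add: r_def mult_right_mono)
    finally show ?thesis by (simp add: \<Delta>_def)
  qed
  have geo: "(norm (\<mu> (Suc k) - \<mu>s))^2 \<le> r^k * (norm (\<mu> 1 - \<mu>s))^2" for k
  proof (induction k)
    case 0 then show ?case by simp
  next
    case (Suc k)
    have "(norm (\<mu> (Suc (Suc k)) - \<mu>s))^2 \<le> r * (norm (\<mu> (Suc k) - \<mu>s))^2"
      using step[of "Suc k"] by simp
    also have "\<dots> \<le> r * (r^k * (norm (\<mu> 1 - \<mu>s))^2)" using Suc r by (simp add: mult_left_mono)
    finally show ?case by simp
  qed
  have lim\<mu>s: "(\<lambda>k. (norm (\<mu> (Suc k) - \<mu>s))^2) \<longlonglongrightarrow> 0"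
  proof (rule tendsto_sandwich[OF _ _ tendsto_const])
    show "\<forall>\<^sub>F k in sequentially. 0 \<le> (norm (\<mu> (Suc k) - \<mu>s))^2" by simp
    show "\<forall>\<^sub>F k in sequentially. (norm (\<mu> (Suc k) - \<mu>s))^2 \<le> r^k * (norm (\<mu> 1 - \<mu>s))^2"
      using geo by simp
    show "(\<lambda>k. r^k * (norm (\<mu> 1 - \<mu>s))^2) \<longlonglongrightarrow> 0"
      using r by (intro tendsto_mult_left_zero LIMSEQ_power_zero) auto
  qed
  then have lim\<mu>: "(\<lambda>k. (norm (\<mu> k - \<mu>s))^2) \<longlonglongrightarrow> 0" by (rule LIMSEQ_imp_Suc)
  have zb: "(norm (z (Suc (Suc k)) - zs))^2 \<le> (\<sigma>g / \<sigma>c)^2 * (norm (\<mu> (Suc k) - \<mu>s))^2" for k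
  proof -
    have "norm (z (Suc k + 1) - zs) \<le> \<sigma>g / \<sigma>c * norm (\<mu> (Suc k) - \<mu>s)"
      using Lip[OF zmin[of "Suc k"] saddle(1) smin] by simp
    then have "(norm (z (Suc k + 1) - zs))^2 \<le> (\<sigma>g / \<sigma>c * norm (\<mu> (Suc k) - \<mu>s))^2"
      by (simp add: power_mono)
    also have "(\<sigma>g / \<sigma>c * norm (\<mu> (Suc k) - \<mu>s))^2 = (\<sigma>g / \<sigma>c)^2 * (norm (\<mu> (Suc k) - \<mu>s))^2"
      by (rule power_mult_distrib)
    finally show ?thesis by simp
  qed
  have "(\<lambda>k. (norm (z (Suc (Suc k)) - zs))^2) \<longlonglongrightarrow> 0"
  proof (rule tendsto_sandwich[OF _ _ tendsto_const])
    show "\<forall>\<^sub>F k in sequentially. 0 \<le> (norm (z (Suc (Suc k)) - zs))^2" by simp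
    show "\<forall>\<^sub>F k in sequentially. (norm (z (Suc (Suc k)) - zs))^2 \<le> (\<sigma>g / \<sigma>c)^2 * (norm (\<mu> (Suc k) - \<mu>s))^2"
      using zb by simp
    show "(\<lambda>k. (\<sigma>g / \<sigma>c)^2 * (norm (\<mu> (Suc k) - \<mu>s))^2) \<longlonglongrightarrow> 0"
      using lim\<mu>s by (intro tendsto_mult_right_zero)
  qed
  then have "(\<lambda>k. (norm (z (Suc k) - zs))^2) \<longlonglongrightarrow> 0" by (rule LIMSEQ_imp_Suc)
  then have "(\<lambda>k. (norm (z k - zs))^2) \<longlonglongrightarrow> 0" by (rule LIMSEQ_imp_Suc)
  with lim\<mu> show ?thesis by simp
qed

end
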